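(* Let $K \in \mathbb{R}^{m\times n}$ and let $\phi_1,\dots,\phi_m:\mathbb{R}\to(0,\infty)$ be bounded univariate probability densities. Define $f_X:\mathbb{R}^n\to(0,\infty)$ by $f_X(x) = \prod_{i=1}^m \phi_i\big((Kx)_i\big)$ and let $N := \ker(K)$. Then: (a) $\int_{\mathbb{R}^n} f_X(x)\,\mathrm{d}x < \infty$ if and only if $N = \{0\}$; (b) regardless of whether $K$ is injective, $\int_{N^\perp} f_X(x)\,\mathrm{d}x < \infty$, where the integral is with respect to Lebesgue measure on the linear subspace $N^\perp$.
   Context: $N^\perp$ denotes the orthogonal complement of $N$ in $\mathbb{R}^n$ (equivalently, the span of the rows of $K$). *)

theory Defs
  imports "HOL-Analysis.Analysis"
begin

definition bounded_pos_density :: "(real \<Rightarrow> real) \<Rightarrow> bool" where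
  "bounded_pos_density \<phi> \<longleftrightarrow>
     \<phi> \<in> borel_measurable borel \<and> (\<forall>t. 0 < \<phi> t) \<and> bounded (range \<phi>) \<and>
     (\<integral>\<^sup>+ t. ennreal (\<phi> t) \<partial>lborel) = 1"

definition ker_mat :: "real^'n^'m \<Rightarrow> (real^'n) set" where
  "ker_mat K = {x. K *v x = 0}"

definition orth_compl :: "(real^'n) set \<Rightarrow> (real^'n) set" where
  "orth_compl N = {x. \<forall>y\<in>N. orthogonal x y}"

definition fX :: "real^'n^'m \<Rightarrow> ('m \<Rightarrow> real \<Rightarrow> real) \<Rightarrow> real^'n \<Rightarrow> real" where
  "fX K \<phi> x = (\<Prod>i\<in>UNIV. \<phi> i ((K *v x) $ i))"

text \<open>Integral (nonnegative) of f over a linear subspace S with respect to its Lebesgue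
  measure, computed via an orthonormal basis b 0, ..., b (d-1) of S, i.e. as the Lebesgue
  integral over R^d of f (sum_j y_j b_j).\<close>
definition orthonormal_basis_of :: "nat \<Rightarrow> (nat \<Rightarrow> real^'n) \<Rightarrow> (real^'n) set \<Rightarrow> bool" where
  "orthonormal_basis_of d b S \<longleftrightarrow>
     (\<forall>i<d. \<forall>j<d. b i \<bullet> b j = (if i = j then 1 else 0)) \<and> span (b ` {..<d}) = S"

definition subspace_nn_integral ::
    "nat \<Rightarrow> (nat \<Rightarrow> real^'n) \<Rightarrow> (real^'n \<Rightarrow> real) \<Rightarrow> ennreal" where
  "subspace_nn_integral d b f =
     (\<integral>\<^sup>+ y. ennreal (f (\<Sum>j<d. y j *\<^sub>R b j)) \<partial>(PiM {..<d} (\<lambda>_. lborel)))"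

end

theory Submission
  imports Defs
begin


lemma core:
  fixes \<phi> :: "'m::finite \<Rightarrow> real \<Rightarrow> real" and I :: "'j set"
  assumes meas[measurable]: "\<And>i. \<phi> i \<in> borel_measurable borel"
    and bnd: "\<And>i t. \<phi> i t \<le> C"
    and int1: "\<And>i. (\<integral>\<^sup>+ t. ennreal (\<phi> i t) \<partial>lborel) = 1"
    and fin: "finite I"
  shows "\<forall>R w. (\<forall>y. (\<forall>i\<in>R. (\<Sum>j\<in>I. y j * w j i) = 0) \<longrightarrow> (\<forall>j\<in>I. y j = 0)) \<longrightarrow>
     (\<exists>B<\<infinity>. \<forall>a. (\<integral>\<^sup>+ y. (\<Prod>i\<in>R. ennreal (\<phi> i (a i + (\<Sum>j\<in>I. y j * w j i)))) \<partial>PiM I (\<lambda>_. lborel)) \<le> B)"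
  using fin
proof (induction I rule: finite_induct)
  case empty
  show ?case
  proof (intro allI impI)
    fix R :: "'m set" and w :: "'j \<Rightarrow> 'm \<Rightarrow> real"
    have "(\<integral>\<^sup>+ y. (\<Prod>i\<in>R. ennreal (\<phi> i (a i + (\<Sum>j\<in>{}. y j * w j i)))) \<partial>PiM {} (\<lambda>_. lborel))
          \<le> ennreal C ^ card R" for a
    proof -
      have "(\<integral>\<^sup>+ y. (\<Prod>i\<in>R. ennreal (\<phi> i (a i + (\<Sum>j\<in>{}. y j * w j i)))) \<partial>PiM {} (\<lambda>_. lborel))
          = (\<Prod>i\<in>R. ennreal (\<phi> i (a i)))"
        by (simp add: PiM_empty nn_integral_count_space_finite)
      also have "\<dots> \<le> (\<Prod>i\<in>R. ennreal C)"
        by (rule prod_mono_ennreal) (auto intro: ennreal_leI bnd)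
      finally show ?thesis by simp
    qed
    then show "\<exists>B<\<infinity>. \<forall>a. (\<integral>\<^sup>+ y. (\<Prod>i\<in>R. ennreal (\<phi> i (a i + (\<Sum>j\<in>{}. y j * w j i)))) \<partial>PiM {} (\<lambda>_. lborel)) \<le> B"
      by (intro exI[of _ "ennreal C ^ card R"]) (auto simp: power_less_top_ennreal)
  qed
next
  case (insert j0 J)
  interpret PS: product_sigma_finite "\<lambda>_::'j. lborel :: real measure"
    by (simp add: product_sigma_finite_def lborel.sigma_finite_measure_axioms)
  have PSF: "pair_sigma_finite (lborel :: real measure) (PiM J (\<lambda>_. lborel :: real measure))"
    unfolding pair_sigma_finite_def using PS.sigma_finite[OF insert.hyps(1)] lborel.sigma_finite_measure_axioms
    by blast
  show ?case
  proof (intro allI impI)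
    fix R :: "'m set" and w :: "'j \<Rightarrow> 'm \<Rightarrow> real"
    assume ind: "\<forall>y. (\<forall>i\<in>R. (\<Sum>j\<in>insert j0 J. y j * w j i) = 0) \<longrightarrow> (\<forall>j\<in>insert j0 J. y j = 0)"
    obtain i0 where i0: "i0 \<in> R" "w j0 i0 \<noteq> 0"
    proof (rule ccontr)
      assume "\<not> thesis"
      then have z: "\<forall>i\<in>R. w j0 i = 0" using that by blast
      have "\<forall>i\<in>R. (\<Sum>j\<in>insert j0 J. (if j = j0 then 1 else 0) * w j i) = 0"
        using z insert.hyps by (auto intro!: sum.neutral)
      with ind[THEN spec, of "\<lambda>j. if j = j0 then 1 else 0"] show False by simp
    qed
    define c where "c = w j0 i0"
    have c0: "c \<noteq> 0" using i0 c_def by simp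
    define w' where "w' j i = w j i - (w j i0 / c) * w j0 i" for j i
    have ind': "\<forall>y. (\<forall>i\<in>R-{i0}. (\<Sum>j\<in>J. y j * w' j i) = 0) \<longrightarrow> (\<forall>j\<in>J. y j = 0)"
    proof (intro allI impI)
      fix y :: "'j \<Rightarrow> real"
      assume h: "\<forall>i\<in>R-{i0}. (\<Sum>j\<in>J. y j * w' j i) = 0"
      have sw': "(\<Sum>j\<in>J. y j * w' j i) = (\<Sum>j\<in>J. y j * w j i) - (\<Sum>j\<in>J. y j * w j i0) / c * w j0 i" for i
        by (simp add: w'_def algebra_simps sum_subtractf sum_distrib_left sum_distrib_right sum_divide_distrib)
      have h0: "(\<Sum>j\<in>J. y j * w' j i0) = 0"
        using c0 by (simp add: sw' c_def)
      define y' where "y' = y(j0 := - (\<Sum>j\<in>J. y j * w j i0) / c)"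
      have "\<forall>i\<in>R. (\<Sum>j\<in>insert j0 J. y' j * w j i) = 0"
      proof
        fix i assume "i \<in> R"
        then have "(\<Sum>j\<in>J. y j * w' j i) = 0" using h h0 by (cases "i = i0") auto
        moreover have "(\<Sum>j\<in>J. y' j * w j i) = (\<Sum>j\<in>J. y j * w j i)"
          using insert.hyps by (intro sum.cong) (auto simp: y'_def)
        ultimately show "(\<Sum>j\<in>insert j0 J. y' j * w j i) = 0"
          using insert.hyps by (simp add: sw' y'_def algebra_simps)
      qed
      with ind have "\<forall>j\<in>insert j0 J. y' j = 0" by blast
      then show "\<forall>j\<in>J. y j = 0" using insert.hyps by (auto simp: y'_def split: if_splits)
    qed
    obtain B' where B': "B' < \<infinity>" and B'le: "\<And>a. (\<integral>\<^sup>+ y. (\<Prod>i\<in>R-{i0}. ennreal (\<phi> i (a i + (\<Sum>j\<in>J. y j * w' j i)))) \<partial>PiM J (\<lambda>_. lborel)) \<le> B'"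
      using insert.IH ind' by blast
    show "\<exists>B<\<infinity>. \<forall>a. (\<integral>\<^sup>+ y. (\<Prod>i\<in>R. ennreal (\<phi> i (a i + (\<Sum>j\<in>insert j0 J. y j * w j i)))) \<partial>PiM (insert j0 J) (\<lambda>_. lborel)) \<le> B"
    proof (intro exI[of _ "B' * ennreal (1 / \<bar>c\<bar>)"] conjI allI)
      show "B' * ennreal (1 / \<bar>c\<bar>) < \<infinity>" using B' by (simp add: ennreal_mult_less_top)
    next
      fix a :: "'m \<Rightarrow> real"
      define S where "S x = (\<Sum>j\<in>J. x j * w j i0)" for x :: "'j \<Rightarrow> real"
      define H where "H t x = (\<Prod>i\<in>R-{i0}. ennreal (\<phi> i ((a i + t * w j0 i) + (\<Sum>j\<in>J. x j * w' j i))))"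
        for t :: real and x :: "'j \<Rightarrow> real"
      define G where "G t x = ennreal (\<phi> i0 (a i0 + c * t)) * H t x" for t :: real and x :: "'j \<Rightarrow> real"
      define F where "F y = (\<Prod>i\<in>R. ennreal (\<phi> i (a i + (\<Sum>j\<in>insert j0 J. y j * w j i))))" for y :: "'j \<Rightarrow> real"
      have Fm: "F \<in> borel_measurable (PiM (insert j0 J) (\<lambda>_. lborel))"
        unfolding F_def by measurable
      have Hm: "case_prod H \<in> borel_measurable (lborel \<Otimes>\<^sub>M PiM J (\<lambda>_. lborel))"
        unfolding H_def by measurable
      have Gm: "case_prod G \<in> borel_measurable (lborel \<Otimes>\<^sub>M PiM J (\<lambda>_. lborel))"
        unfolding G_def using Hm by measurable
      have Ht: "H t \<in> borel_measurable (PiM J (\<lambda>_. lborel))" for t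
        using Hm by measurable
      have FG: "F (x(j0 := t - S x / c)) = G t x" for x t
      proof -
        define s where "s = t - S x / c"
        have sm: "(\<Sum>j\<in>insert j0 J. (x(j0:=s)) j * w j i) = s * w j0 i + (\<Sum>j\<in>J. x j * w j i)" for i
        proof -
          have "(\<Sum>j\<in>J. (x(j0:=s)) j * w j i) = (\<Sum>j\<in>J. x j * w j i)"
            using insert.hyps by (intro sum.cong) auto
          then show ?thesis using insert.hyps by simp
        qed
        have sw: "(\<Sum>j\<in>J. x j * w' j i) = (\<Sum>j\<in>J. x j * w j i) - S x / c * w j0 i" for i
          by (simp add: S_def w'_def algebra_simps sum_subtractf sum_distrib_left sum_distrib_right sum_divide_distrib)
        have e0: "a i0 + (s * w j0 i0 + (\<Sum>j\<in>J. x j * w j i0)) = a i0 + c * t"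
          using c0 by (simp add: s_def S_def c_def[symmetric] field_simps)
        have e1: "a i + (s * w j0 i + (\<Sum>j\<in>J. x j * w j i)) = (a i + t * w j0 i) + (\<Sum>j\<in>J. x j * w' j i)" for i
          by (simp add: sw s_def algebra_simps)
        have "F (x(j0 := s)) = (\<Prod>i\<in>R. ennreal (\<phi> i (a i + (s * w j0 i + (\<Sum>j\<in>J. x j * w j i)))))"
          unfolding F_def sm ..
        also have "\<dots> = ennreal (\<phi> i0 (a i0 + (s * w j0 i0 + (\<Sum>j\<in>J. x j * w j i0)))) *
            (\<Prod>i\<in>R-{i0}. ennreal (\<phi> i (a i + (s * w j0 i + (\<Sum>j\<in>J. x j * w j i)))))"
          by (rule prod.remove[OF finite i0(1)])
        also have "\<dots> = G t x"
          unfolding e0 unfolding G_def H_def e1 ..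
        finally show ?thesis unfolding s_def .
      qed
      have X: "(\<integral>\<^sup>+ t. ennreal (\<phi> i0 (a i0 + c * t)) \<partial>lborel) = ennreal (1 / \<bar>c\<bar>)"
      proof -
        have "1 = ennreal \<bar>c\<bar> * (\<integral>\<^sup>+ t. ennreal (\<phi> i0 (a i0 + c * t)) \<partial>lborel)"
          using nn_integral_real_affine[of "\<lambda>t. ennreal (\<phi> i0 t)" c "a i0"] c0 int1[of i0] by simp
        then have "ennreal (1 / \<bar>c\<bar>) = ennreal (1 / \<bar>c\<bar>) * ennreal \<bar>c\<bar> * (\<integral>\<^sup>+ t. ennreal (\<phi> i0 (a i0 + c * t)) \<partial>lborel)"
          by (simp add: mult.assoc)
        also have "ennreal (1 / \<bar>c\<bar>) * ennreal \<bar>c\<bar> = 1"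
          using c0 by (simp add: ennreal_mult'[symmetric])
        finally show ?thesis by simp
      qed
      have "integral\<^sup>N (PiM (insert j0 J) (\<lambda>_. lborel)) F = (\<integral>\<^sup>+ x. (\<integral>\<^sup>+ s. F (x(j0 := s)) \<partial>lborel) \<partial>PiM J (\<lambda>_. lborel))"
        by (rule PS.product_nn_integral_insert[OF insert.hyps(1,2) Fm])
      also have "\<dots> = (\<integral>\<^sup>+ x. (\<integral>\<^sup>+ t. G t x \<partial>lborel) \<partial>PiM J (\<lambda>_. lborel))"
      proof (rule nn_integral_cong)
        fix x assume "x \<in> space (PiM J (\<lambda>_. lborel :: real measure))"
        have "(\<integral>\<^sup>+ s. F (x(j0 := s)) \<partial>lborel) = ennreal \<bar>1\<bar> * (\<integral>\<^sup>+ t. F (x(j0 := - S x / c + 1 * t)) \<partial>lborel)"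
        proof (rule nn_integral_real_affine)
          have "(\<lambda>s. F (x(j0 := s))) \<in> borel_measurable lborel"
            by (rule measurable_comp[OF measurable_component_update Fm, unfolded comp_def])
              (use \<open>x \<in> _\<close> insert.hyps in auto)
          then show "(\<lambda>s. F (x(j0 := s))) \<in> borel_measurable borel" by simp
        qed simp
        then show "(\<integral>\<^sup>+ s. F (x(j0 := s)) \<partial>lborel) = (\<integral>\<^sup>+ t. G t x \<partial>lborel)"
          by (simp add: FG)
      qed
      also have "\<dots> = (\<integral>\<^sup>+ t. (\<integral>\<^sup>+ x. G t x \<partial>PiM J (\<lambda>_. lborel)) \<partial>lborel)"
        by (rule pair_sigma_finite.Fubini'[OF PSF Gm])
      also have "\<dots> = (\<integral>\<^sup>+ t. ennreal (\<phi> i0 (a i0 + c * t)) * (\<integral>\<^sup>+ x. H t x \<partial>PiM J (\<lambda>_. lborel)) \<partial>lborel)"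
        unfolding G_def by (intro nn_integral_cong nn_integral_cmult Ht)
      also have "\<dots> \<le> (\<integral>\<^sup>+ t. ennreal (\<phi> i0 (a i0 + c * t)) * B' \<partial>lborel)"
        by (intro nn_integral_mono mult_left_mono) (auto simp: H_def intro: B'le)
      also have "\<dots> = B' * ennreal (1 / \<bar>c\<bar>)"
        by (subst nn_integral_multc) (use X in \<open>simp_all add: mult.commute\<close>)
      finally show "(\<integral>\<^sup>+ y. (\<Prod>i\<in>R. ennreal (\<phi> i (a i + (\<Sum>j\<in>insert j0 J. y j * w j i)))) \<partial>PiM (insert j0 J) (\<lambda>_. lborel)) \<le> B' * ennreal (1 / \<bar>c\<bar>)"
        unfolding F_def .
    qed
  qed
qed



lemma fX_meas[measurable]:
  fixes K :: "real^'n^'m" and \<phi> :: "'m \<Rightarrow> real \<Rightarrow> real"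
  assumes [measurable]: "\<And>i. \<phi> i \<in> borel_measurable borel"
  shows "fX K \<phi> \<in> borel_measurable borel"
proof -
  have c: "(\<lambda>x. (K *v x) $ i) \<in> borel_measurable borel" for i
    by (intro borel_measurable_continuous_onI continuous_on_component linear_continuous_on)
      (simp add: linear_linear[symmetric])
  show ?thesis unfolding fX_def[abs_def] using c by measurable
qed

lemma fX_lin:
  fixes K :: "real^'n^'m"
  shows "fX K \<phi> (\<Sum>j\<in>I. y j *\<^sub>R b j) = (\<Prod>i\<in>UNIV. \<phi> i (\<Sum>j\<in>I. y j * (K *v b j) $ i))"
  unfolding fX_def by (simp add: vec.sum matrix_vector_mult_scaleR)

lemma common_bound:
  fixes \<phi> :: "'m::finite \<Rightarrow> real \<Rightarrow> real"
  assumes "\<And>i. bounded_pos_density (\<phi> i)"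
  shows "\<exists>C. \<forall>i t. \<phi> i t \<le> C"
proof -
  have "\<forall>i. \<exists>c. 0 \<le> c \<and> (\<forall>t. \<phi> i t \<le> c)"
  proof
    fix i
    from assms[of i] have "bounded (range (\<phi> i))" by (simp add: bounded_pos_density_def)
    then obtain a where "\<forall>x\<in>range (\<phi> i). norm x \<le> a" by (auto simp: bounded_iff)
    then have "\<forall>t. \<phi> i t \<le> a" "0 \<le> a"
      by (metis abs_ge_self order_trans rangeI real_norm_def, metis abs_ge_zero order_trans rangeI real_norm_def)
    then show "\<exists>c. 0 \<le> c \<and> (\<forall>t. \<phi> i t \<le> c)" by blast
  qed
  then obtain c where c: "\<And>i. 0 \<le> c i" "\<And>i t. \<phi> i t \<le> c i" by metis
  have "\<phi> i t \<le> (\<Sum>k\<in>UNIV. c k)" for i t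
    using c(2)[of i t] member_le_sum[of i UNIV c] c(1) by force
  then show ?thesis by blast
qed

lemma fin_lin:
  fixes K :: "real^'n^'m" and \<phi> :: "'m \<Rightarrow> real \<Rightarrow> real" and I :: "'j set" and b :: "'j \<Rightarrow> real^'n"
  assumes dens: "\<And>i. bounded_pos_density (\<phi> i)" and fin: "finite I"
    and ind: "\<And>y. K *v (\<Sum>j\<in>I. y j *\<^sub>R b j) = 0 \<Longrightarrow> \<forall>j\<in>I. y j = 0"
  shows "(\<integral>\<^sup>+ y. ennreal (fX K \<phi> (\<Sum>j\<in>I. y j *\<^sub>R b j)) \<partial>PiM I (\<lambda>_. lborel)) < \<infinity>"
proof -
  have "\<exists>C. \<forall>i t. \<phi> i t \<le> C" by (rule common_bound) (rule dens)
  then obtain C where C: "\<And>i t. \<phi> i t \<le> C" by blast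
  have meas: "\<And>i. \<phi> i \<in> borel_measurable borel" and pos: "\<And>i t. 0 < \<phi> i t"
    and int1: "\<And>i. (\<integral>\<^sup>+ t. ennreal (\<phi> i t) \<partial>lborel) = 1"
    using dens by (auto simp: bounded_pos_density_def)
  define w where "w j i = (K *v b j) $ i" for j i
  have ind': "\<forall>y. (\<forall>i\<in>UNIV. (\<Sum>j\<in>I. y j * w j i) = 0) \<longrightarrow> (\<forall>j\<in>I. y j = 0)"
  proof (intro allI impI)
    fix y :: "'j \<Rightarrow> real" assume h: "\<forall>i\<in>UNIV. (\<Sum>j\<in>I. y j * w j i) = 0"
    have "K *v (\<Sum>j\<in>I. y j *\<^sub>R b j) = 0"
      using h by (simp add: vec_eq_iff vec.sum matrix_vector_mult_scaleR w_def)
    then show "\<forall>j\<in>I. y j = 0" by (rule ind)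
  qed
  obtain B where B: "B < \<infinity>" and Ble: "\<And>a. (\<integral>\<^sup>+ y. (\<Prod>i\<in>UNIV. ennreal (\<phi> i (a i + (\<Sum>j\<in>I. y j * w j i)))) \<partial>PiM I (\<lambda>_. lborel)) \<le> B"
    using core[where \<phi>=\<phi> and C=C and I=I, OF meas C int1 fin, THEN spec[where x=UNIV], THEN spec[where x=w], THEN mp, OF ind'] by blast
  have "(\<integral>\<^sup>+ y. ennreal (fX K \<phi> (\<Sum>j\<in>I. y j *\<^sub>R b j)) \<partial>PiM I (\<lambda>_. lborel))
      = (\<integral>\<^sup>+ y. (\<Prod>i\<in>UNIV. ennreal (\<phi> i ((\<lambda>_. 0) i + (\<Sum>j\<in>I. y j * w j i)))) \<partial>PiM I (\<lambda>_. lborel))"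
    by (intro nn_integral_cong) (simp add: fX_lin w_def prod_ennreal less_imp_le[OF pos])
  also have "\<dots> \<le> B" by (rule Ble)
  finally show ?thesis using B by simp
qed

lemma sum_basis_inner:
  fixes y :: "'a::euclidean_space \<Rightarrow> real"
  assumes "j \<in> Basis"
  shows "(\<Sum>b\<in>Basis. y b *\<^sub>R b) \<bullet> j = y j"
  using assms by (simp add: inner_sum_left inner_Basis if_distrib cong: if_cong)

lemma part_a_if:
  fixes K :: "real^'n^'m" and \<phi> :: "'m \<Rightarrow> real \<Rightarrow> real"
  assumes dens: "\<And>i. bounded_pos_density (\<phi> i)" and ker: "ker_mat K = {0}"
  shows "(\<integral>\<^sup>+ x. ennreal (fX K \<phi> x) \<partial>lborel) < \<infinity>"
proof -
  have meas[measurable]: "\<And>i. \<phi> i \<in> borel_measurable borel"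
    using dens by (auto simp: bounded_pos_density_def)
  have "(\<integral>\<^sup>+ x. ennreal (fX K \<phi> x) \<partial>lborel)
      = (\<integral>\<^sup>+ x. ennreal (fX K \<phi> x) \<partial>distr (PiM Basis (\<lambda>_. lborel)) borel (\<lambda>f. \<Sum>b\<in>(Basis::(real^'n) set). f b *\<^sub>R b))"
    by (simp only: lborel_eq[where 'a="real^'n"])
  also have "\<dots> = (\<integral>\<^sup>+ y. ennreal (fX K \<phi> (\<Sum>b\<in>(Basis::(real^'n) set). y b *\<^sub>R b)) \<partial>PiM Basis (\<lambda>_. lborel))"
    by (rule nn_integral_distr) (measurable, use fX_meas[OF meas] in measurable)
  also have "\<dots> < \<infinity>"
  proof (rule fin_lin[OF dens])
    fix y :: "real^'n \<Rightarrow> real"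
    assume "K *v (\<Sum>b\<in>Basis. y b *\<^sub>R b) = 0"
    then have "(\<Sum>b\<in>Basis. y b *\<^sub>R b) = 0" using ker by (auto simp: ker_mat_def)
    then show "\<forall>j\<in>Basis. y j = 0" using sum_basis_inner[of _ y] by force
  qed simp
  finally show ?thesis .
qed

lemma part_b:
  fixes K :: "real^'n^'m" and \<phi> :: "'m \<Rightarrow> real \<Rightarrow> real"
  assumes dens: "\<And>i. bounded_pos_density (\<phi> i)"
    and ob: "orthonormal_basis_of d b (orth_compl (ker_mat K))"
  shows "subspace_nn_integral d b (fX K \<phi>) < \<infinity>"
  unfolding subspace_nn_integral_def
proof (rule fin_lin[OF dens])
  fix y :: "nat \<Rightarrow> real"
  define v where "v = (\<Sum>j<d. y j *\<^sub>R b j)"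
  assume "K *v (\<Sum>j<d. y j *\<^sub>R b j) = 0"
  then have vk: "v \<in> ker_mat K" by (simp add: ker_mat_def v_def)
  have "v \<in> span (b ` {..<d})" unfolding v_def
    by (intro span_sum span_scale span_base) auto
  then have "v \<in> orth_compl (ker_mat K)" using ob by (simp add: orthonormal_basis_of_def)
  then have "orthogonal v v" using vk by (simp add: orth_compl_def)
  then have v0: "v = 0" by (simp add: orthogonal_def)
  show "\<forall>j\<in>{..<d}. y j = 0"
  proof
    fix j assume j: "j \<in> {..<d}"
    have "v \<bullet> b j = (\<Sum>k<d. y k * (b k \<bullet> b j))" by (simp add: v_def inner_sum_left)
    also have "\<dots> = (\<Sum>k<d. if k = j then y k else 0)"
      using ob j by (intro sum.cong) (auto simp: orthonormal_basis_of_def)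
    also have "\<dots> = y j" using j by simp
    finally show "y j = 0" using v0 by simp
  qed
qed simp

lemma part_a_only_if:
  fixes K :: "real^'n^'m" and \<phi> :: "'m \<Rightarrow> real \<Rightarrow> real"
  assumes dens: "\<And>i. bounded_pos_density (\<phi> i)"
    and fin: "(\<integral>\<^sup>+ x. ennreal (fX K \<phi> x) \<partial>lborel) < \<infinity>"
  shows "ker_mat K = {0}"
proof (rule ccontr)
  assume "ker_mat K \<noteq> {0}"
  moreover have "0 \<in> ker_mat K" by (simp add: ker_mat_def)
  ultimately obtain z where z: "K *v z = 0" "z \<noteq> 0" by (auto simp: ker_mat_def)
  have meas[measurable]: "\<And>i. \<phi> i \<in> borel_measurable borel" and pos: "\<And>i t. 0 < \<phi> i t"
    using dens by (auto simp: bounded_pos_density_def)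
  note gm[measurable] = fX_meas[OF meas]
  define g where "g x = ennreal (fX K \<phi> x)" for x
  have gm'[measurable]: "g \<in> borel_measurable borel" unfolding g_def[abs_def] by measurable
  have gpos: "g x > 0" for x
    unfolding g_def fX_def using pos by (simp add: prod_pos)
  have ginv: "g (t *\<^sub>R z + x) = g x" for t x
    unfolding g_def fX_def using z(1) by (simp add: matrix_vector_right_distrib matrix_vector_mult_scaleR)
  define r where "r = norm z / 2"
  have r0: "r > 0" using z(2) by (simp add: r_def)
  define B where "B k = ball (real k *\<^sub>R z) r" for k :: nat
  have Bm[measurable]: "B k \<in> sets borel" for k unfolding B_def by simp
  define c where "c = (\<integral>\<^sup>+ x. g x * indicator (ball 0 r) x \<partial>lborel)"
  have shift: "(\<integral>\<^sup>+ x. g x * indicator (B k) x \<partial>lborel) = c" for k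
  proof -
    have "(\<integral>\<^sup>+ x. g x * indicator (B k) x \<partial>lborel)
        = (\<integral>\<^sup>+ x. g x * indicator (B k) x \<partial>distr lborel borel ((+) (real k *\<^sub>R z)))"
      by (simp only: lborel_distr_plus)
    also have "\<dots> = (\<integral>\<^sup>+ x. g (real k *\<^sub>R z + x) * indicator (B k) (real k *\<^sub>R z + x) \<partial>lborel)"
      by (rule nn_integral_distr) measurable
    also have "\<dots> = c"
      unfolding c_def ginv by (intro nn_integral_cong) (simp add: B_def indicator_def dist_norm)
    finally show ?thesis .
  qed
  have disj: "k = l" if "x \<in> B k" "x \<in> B l" for x k l
  proof (rule ccontr)
    assume "k \<noteq> l"
    then have "1 \<le> \<bar>real k - real l\<bar>" by linarith
    have "norm ((real k - real l) *\<^sub>R z) \<le> dist (real k *\<^sub>R z) x + dist x (real l *\<^sub>R z)"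
      by (metis dist_norm dist_triangle scaleR_diff_left)
    also have "\<dots> < 2 * r" using that by (simp add: B_def dist_commute)
    also have "\<dots> = norm z" by (simp add: r_def)
    finally have "\<bar>real k - real l\<bar> * norm z < 1 * norm z" by simp
    then have "\<bar>real k - real l\<bar> < 1" using z(2) by (simp add: mult_less_cancel_right)
    with \<open>1 \<le> _\<close> show False by simp
  qed
  have pw: "(\<Sum>k<N. g x * indicator (B k) x) \<le> g x" for N x
  proof (cases "\<exists>k<N. x \<in> B k")
    case True
    then obtain k0 where k0: "k0 < N" "x \<in> B k0" by blast
    have "(\<Sum>k<N. g x * indicator (B k) x) = g x * indicator (B k0) x + (\<Sum>k\<in>{..<N}-{k0}. g x * indicator (B k) x)"
      by (rule sum.remove) (use k0 in auto)
    also have "(\<Sum>k\<in>{..<N}-{k0}. g x * indicator (B k) x) = 0"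
      using disj k0 by (intro sum.neutral) (auto simp: indicator_def)
    finally show ?thesis using k0 by simp
  next
    case False
    then have "(\<Sum>k<N. g x * indicator (B k) x) = 0" by (intro sum.neutral) auto
    then show ?thesis by (metis zero_le)
  qed
  have Nc: "of_nat N * c \<le> (\<integral>\<^sup>+ x. g x \<partial>lborel)" for N
  proof -
    have "of_nat N * c = (\<Sum>k<N. (\<integral>\<^sup>+ x. g x * indicator (B k) x \<partial>lborel))"
      by (simp add: shift)
    also have "\<dots> = (\<integral>\<^sup>+ x. (\<Sum>k<N. g x * indicator (B k) x) \<partial>lborel)"
      by (rule nn_integral_sum[symmetric]) measurable
    also have "\<dots> \<le> (\<integral>\<^sup>+ x. g x \<partial>lborel)"
      by (intro nn_integral_mono pw)
    finally show ?thesis .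
  qed
  have cpos: "c \<noteq> 0"
  proof
    assume "c = 0"
    then have "AE x in lborel. g x * indicator (ball 0 r) x = 0"
      unfolding c_def by (subst (asm) nn_integral_0_iff_AE) (measurable, simp)
    then have "AE x in lborel. (x::real^'n) \<notin> ball 0 r"
    proof eventually_elim
      case (elim x)
      then show ?case using gpos[of x] by (auto simp: indicator_def split: if_splits)
    qed
    then have "emeasure lborel (ball (0::real^'n) r) = 0"
      by (subst (asm) AE_iff_measurable[of "ball 0 r"]) auto
    moreover have "measure lborel (ball (0::real^'n) r) > 0" by (rule content_ball_pos[OF r0])
    ultimately show False by (simp add: measure_def)
  qed
  have X: "(\<integral>\<^sup>+ x. g x \<partial>lborel) < \<infinity>" using fin by (simp add: g_def)
  obtain X' where X': "(\<integral>\<^sup>+ x. g x \<partial>lborel) = ennreal X'" "0 \<le> X'"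
    using X by (cases "(\<integral>\<^sup>+ x. g x \<partial>lborel)") auto
  have "c \<le> (\<integral>\<^sup>+ x. g x \<partial>lborel)" using Nc[of 1] by simp
  then obtain c' where c': "c = ennreal c'" "0 < c'"
    using X cpos by (cases c) (auto simp: top_unique)
  obtain N :: nat where N: "X' / c' < real N" using reals_Archimedean2 by blast
  have "ennreal (real N * c') \<le> ennreal X'"
    using Nc[of N] c' X' by (simp add: ennreal_mult' ennreal_of_nat_eq_real_of_nat)
  then have "real N * c' \<le> X'" using X' by (simp add: ennreal_le_iff)
  with N c' show False by (simp add: field_simps)
qed


theorem proposition2p1:
  fixes K :: "real^'n^'m" and \<phi> :: "'m \<Rightarrow> real \<Rightarrow> real"
  assumes "\<And>i. bounded_pos_density (\<phi> i)"
  shows "((\<integral>\<^sup>+ x. ennreal (fX K \<phi> x) \<partial>lborel) < \<infinity> \<longleftrightarrow> ker_mat K = {0})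
     \<and> (\<forall>d b. orthonormal_basis_of d b (orth_compl (ker_mat K)) \<longrightarrow>
              subspace_nn_integral d b (fX K \<phi>) < \<infinity>)"
  using part_a_if[where K=K and \<phi>=\<phi>, OF assms] part_a_only_if[where K=K and \<phi>=\<phi>, OF assms]
    part_b[where K=K and \<phi>=\<phi>, OF assms] by blast

end
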